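(* Let $G$ be a finite abelian group with $N = |G|$, let $A \subseteq G$, let $\Gamma$ be a finite set of characters of $G$, let $\delta > 0$, write $\psi = \psi_{\Gamma,\delta}$, and let $\rho > 0$. Then the number of $x \in A$ for which $(A \ast \psi)(x) \leq \rho$ is at most $\rho N$.
   Context: Sets are identified with indicator functions; $f \ast g(x) = \sum_y f(y)g(x-y)$; arguments of complex numbers lie in $(-\pi,\pi]$. For $\Gamma = \{\gamma_1,\dots,\gamma_d\}$ let $\|x\|_\Gamma = \max_j|\arg\gamma_j(x)|/(2\pi)$ ($\|x\|_\emptyset = 0$), $B_{\Gamma,t} = \{x : \|x\|_\Gamma \leq t\}$, $\widetilde{B}_{\Gamma,\delta}(x) = \int_0^\infty B_{\Gamma,t}(x)\delta^{-1}e^{-t/\delta}\,dt$, $\beta_{\Gamma,\delta} = \widetilde{B}_{\Gamma,\delta}/\sum_y \widetilde{B}_{\Gamma,\delta}(y)$, and $\psi_{\Gamma,\delta} = \beta_{\Gamma,\delta}\ast\beta_{\Gamma,\delta}$. *)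

theory Defs
  imports "HOL-Analysis.Analysis"
begin

definition character :: "('a::ab_group_add \<Rightarrow> complex) \<Rightarrow> bool" where
  "character \<gamma> \<longleftrightarrow> (\<forall>x y. \<gamma> (x + y) = \<gamma> x * \<gamma> y) \<and> (\<forall>x. norm (\<gamma> x) = 1)"

definition conv :: "('a::ab_group_add \<Rightarrow> real) \<Rightarrow> ('a \<Rightarrow> real) \<Rightarrow> 'a \<Rightarrow> real" where
  "conv f g x = (\<Sum>y\<in>UNIV. f y * g (x - y))"

text \<open>Bohr norm: max over gamma in Gamma of |arg gamma(x)|/(2 pi), 0 if Gamma empty
(Arg takes values in (-pi, pi]).\<close>
definition bnorm :: "('a \<Rightarrow> complex) set \<Rightarrow> 'a \<Rightarrow> real" where
  "bnorm \<Gamma> x = (if \<Gamma> = {} then 0 else Max ((\<lambda>\<gamma>. \<bar>Arg (\<gamma> x)\<bar> / (2 * pi)) ` \<Gamma>))"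

definition bohr :: "('a \<Rightarrow> complex) set \<Rightarrow> real \<Rightarrow> 'a \<Rightarrow> real" where
  "bohr \<Gamma> t x = indicator {y. bnorm \<Gamma> y \<le> t} x"

definition bohr_smooth :: "('a \<Rightarrow> complex) set \<Rightarrow> real \<Rightarrow> 'a \<Rightarrow> real" where
  "bohr_smooth \<Gamma> \<delta> x = (LBINT t:{0..}. bohr \<Gamma> t x * (exp (- t / \<delta>) / \<delta>))"

definition beta :: "('a::finite \<Rightarrow> complex) set \<Rightarrow> real \<Rightarrow> 'a \<Rightarrow> real" where
  "beta \<Gamma> \<delta> x = bohr_smooth \<Gamma> \<delta> x / (\<Sum>y\<in>UNIV. bohr_smooth \<Gamma> \<delta> y)"

definition psi :: "('a::{finite,ab_group_add} \<Rightarrow> complex) set \<Rightarrow> real \<Rightarrow> 'a \<Rightarrow> real" where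
  "psi \<Gamma> \<delta> = conv (beta \<Gamma> \<delta>) (beta \<Gamma> \<delta>)"

end

theory Submission
  imports Defs
begin

lemma exp_int: assumes "(\<delta>::real) > 0" shows "(LBINT t:{0..}. exp (- t / \<delta>) / \<delta>) = 1"
proof -
  have h: "((\<lambda>x::real. exp (-(1/\<delta>)*x)) has_integral exp (-(1/\<delta>)*0)/(1/\<delta>)) {0..}"
    by (rule has_integral_exp_minus_to_infinity) (use assms in simp)
  have h2: "((\<lambda>t::real. exp (- t / \<delta>) / \<delta>) has_integral 1) {0..}"
    using has_integral_divide[OF h, of \<delta>] assms by simp
  have "(\<lambda>t::real. exp (- t / \<delta>) / \<delta>) absolutely_integrable_on {0..}"
    using h2 assms by (subst absolutely_integrable_on_iff_nonneg) (auto simp: integrable_on_def)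
  hence si: "set_integrable lborel {0..} (\<lambda>t::real. exp (- t / \<delta>) / \<delta>)"
    unfolding set_integrable_def by (subst (asm) integrable_completion) auto
  have "(LBINT t:{0..}. exp (- t / \<delta>) / \<delta>) = integral {0..} (\<lambda>t. exp (- t / \<delta>) / \<delta>)"
    by (rule set_borel_integral_eq_integral(2)[OF si])
  also have "\<dots> = 1" by (rule integral_unique[OF h2])
  finally show ?thesis .
qed

lemma char_0: assumes "character \<gamma>" shows "\<gamma> 0 = 1"
proof -
  have "\<gamma> 0 = \<gamma> 0 * \<gamma> 0" using assms unfolding character_def by (metis add_0)
  moreover have "\<gamma> 0 \<noteq> 0" using assms unfolding character_def by (metis norm_zero zero_neq_one)
  ultimately show ?thesis by (metis mult_cancel_left2)
qed

lemma char_neg: assumes "character \<gamma>" shows "\<gamma> (-x) = cnj (\<gamma> x)"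
proof -
  have "\<gamma> x * \<gamma> (-x) = 1" using assms char_0[OF assms] unfolding character_def by (metis add.right_inverse)
  moreover have "\<gamma> x * cnj (\<gamma> x) = 1" using assms unfolding character_def
    by (metis complex_norm_square mult.commute of_real_1 power_one)
  ultimately show ?thesis by (metis mult_cancel_left zero_neq_one mult_zero_left)
qed

lemma bnorm_neg: assumes "\<forall>\<gamma>\<in>\<Gamma>. character \<gamma>" shows "bnorm \<Gamma> (-x) = bnorm \<Gamma> x"
proof -
  have "(\<lambda>\<gamma>. \<bar>Arg (\<gamma> (-x))\<bar> / (2 * pi)) ` \<Gamma> = (\<lambda>\<gamma>. \<bar>Arg (\<gamma> x)\<bar> / (2 * pi)) ` \<Gamma>"
    using assms by (intro image_cong refl) (auto simp: char_neg Arg_cnj)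
  thus ?thesis unfolding bnorm_def by simp
qed

lemma bnorm_0: assumes "\<forall>\<gamma>\<in>\<Gamma>. character \<gamma>" shows "bnorm \<Gamma> 0 = 0"
proof -
  have "\<Gamma> \<noteq> {} \<Longrightarrow> (\<lambda>\<gamma>. \<bar>Arg (\<gamma> 0)\<bar> / (2 * pi)) ` \<Gamma> = {0}"
  proof -
    have "\<forall>\<gamma>\<in>\<Gamma>. \<gamma> 0 = 1" using assms char_0 by blast
    thus "\<Gamma> \<noteq> {} \<Longrightarrow> ?thesis" by (auto simp: image_iff) (metis Arg_1)
  qed
  thus ?thesis unfolding bnorm_def by auto
qed

lemma bs_neg: assumes "\<forall>\<gamma>\<in>\<Gamma>. character \<gamma>" shows "bohr_smooth \<Gamma> \<delta> (-x) = bohr_smooth \<Gamma> \<delta> x"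
proof -
  have "bohr \<Gamma> t (-x) = bohr \<Gamma> t x" for t unfolding bohr_def using bnorm_neg[OF assms] by (simp add: indicator_def)
  thus ?thesis unfolding bohr_smooth_def by simp
qed

lemma bs_nonneg: assumes "\<delta> > 0" shows "bohr_smooth \<Gamma> \<delta> x \<ge> 0"
  unfolding bohr_smooth_def set_lebesgue_integral_def
  using assms by (intro Bochner_Integration.integral_nonneg_AE AE_I2) (auto simp: bohr_def indicator_def)

lemma bs_0: assumes "\<forall>\<gamma>\<in>\<Gamma>. character \<gamma>" "\<delta> > 0" shows "bohr_smooth \<Gamma> \<delta> 0 = 1"
proof -
  have "bohr_smooth \<Gamma> \<delta> 0 = (LBINT t:{0..}. exp (- t / \<delta>) / \<delta>)"
    unfolding bohr_smooth_def
    by (rule set_lebesgue_integral_cong) (auto simp: bohr_def bnorm_0[OF assms(1)])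
  thus ?thesis using exp_int[OF assms(2)] by simp
qed

lemma sum_shift: "(\<Sum>y\<in>UNIV. g (x - y)) = (\<Sum>y\<in>(UNIV::'a::{finite,ab_group_add} set). g y)"
  by (rule sum.reindex_bij_witness[of _ "\<lambda>y. x - y" "\<lambda>y. x - y"]) auto

lemma main_comb:
  fixes b :: "'a::{finite,ab_group_add} \<Rightarrow> real" and A :: "'a set"
  assumes nonneg: "\<And>x. b x \<ge> 0" and sum1: "sum b UNIV = 1" and sym: "\<And>x. b (-x) = b x"
    and rho: "\<rho> > 0"
  shows "real (card {x\<in>A. conv (indicator A) (conv b b) x \<le> \<rho>}) \<le> \<rho> * real (card (UNIV::'a set))"
proof -
  define S where "S = {x\<in>A. conv (indicator A) (conv b b) x \<le> \<rho>}"
  define p where "p = conv b b"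
  define N where "N = card (UNIV::'a set)"
  define f where "f u = (\<Sum>x\<in>S. b (x - u))" for u
  have pnn: "p x \<ge> 0" for x unfolding p_def conv_def by (intro sum_nonneg) (simp add: nonneg)
  have SA: "S \<subseteq> A" unfolding S_def by auto
  have 3: "(\<Sum>y\<in>S. p (x - y)) \<le> conv (indicator A) p x" for x
  proof -
    have "(\<Sum>y\<in>S. p (x - y)) = (\<Sum>y\<in>S. indicator A y * p (x - y))"
      using SA by (intro sum.cong) (auto simp: indicator_def)
    also have "\<dots> \<le> (\<Sum>y\<in>UNIV. indicator A y * p (x - y))"
      by (rule sum_mono2) (auto simp: pnn)
    finally show ?thesis unfolding conv_def .
  qed
  have 4: "(\<Sum>x\<in>S. \<Sum>y\<in>S. p (x - y)) \<le> \<rho> * card S"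
  proof -
    have "(\<Sum>x\<in>S. \<Sum>y\<in>S. p (x - y)) \<le> (\<Sum>x\<in>S. \<rho>)"
    proof (rule sum_mono)
      fix x assume "x \<in> S"
      hence "conv (indicator A) p x \<le> \<rho>" unfolding S_def p_def by simp
      thus "(\<Sum>y\<in>S. p (x - y)) \<le> \<rho>" using 3[of x] by linarith
    qed
    thus ?thesis by (simp add: mult.commute)
  qed
  have 5: "p (x - y) = (\<Sum>u\<in>UNIV. b (x - u) * b (y - u))" for x y
  proof -
    have "p (x - y) = (\<Sum>z\<in>UNIV. b z * b (x - y - z))" unfolding p_def conv_def ..
    also have "\<dots> = (\<Sum>u\<in>UNIV. b (x - u) * b (x - y - (x - u)))"
      by (rule sum_shift[symmetric, where g = "\<lambda>z. b z * b (x - y - z)"])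
    also have "\<dots> = (\<Sum>u\<in>UNIV. b (x - u) * b (y - u))"
    proof (intro sum.cong refl)
      fix u
      have "x - y - (x - u) = -(y - u)" by (simp add: algebra_simps)
      hence "b (x - y - (x - u)) = b (y - u)" using sym[of "y - u"] by (simp only:)
      thus "b (x - u) * b (x - y - (x - u)) = b (x - u) * b (y - u)" by simp
    qed
    finally show ?thesis .
  qed
  have 6: "(\<Sum>x\<in>S. \<Sum>y\<in>S. p (x - y)) = (\<Sum>u\<in>UNIV. f u ^ 2)"
  proof -
    have "(\<Sum>x\<in>S. \<Sum>y\<in>S. p (x - y)) = (\<Sum>x\<in>S. \<Sum>y\<in>S. \<Sum>u\<in>UNIV. b (x - u) * b (y - u))"
      by (simp add: 5)
    also have "\<dots> = (\<Sum>x\<in>S. \<Sum>u\<in>UNIV. \<Sum>y\<in>S. b (x - u) * b (y - u))"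
      by (rule sum.cong[OF refl], rule sum.swap)
    also have "\<dots> = (\<Sum>u\<in>UNIV. \<Sum>x\<in>S. \<Sum>y\<in>S. b (x - u) * b (y - u))"
      by (rule sum.swap)
    also have "\<dots> = (\<Sum>u\<in>UNIV. f u ^ 2)"
      by (simp add: f_def power2_eq_square sum_product)
    finally show ?thesis .
  qed
  have 7: "(\<Sum>u\<in>UNIV. f u) = card S"
  proof -
    have "(\<Sum>u\<in>UNIV. f u) = (\<Sum>x\<in>S. \<Sum>u\<in>UNIV. b (x - u))"
      unfolding f_def by (rule sum.swap)
    also have "\<dots> = (\<Sum>x\<in>S. 1)" by (simp add: sum_shift sum1)
    finally show ?thesis by simp
  qed
  have 8: "real (card S) ^ 2 \<le> (\<Sum>u\<in>UNIV. f u ^ 2) * real N"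
  proof -
    have "(\<Sum>u\<in>UNIV. f u) ^ 2 \<le> (\<Sum>u\<in>UNIV. f u ^ 2) * real N"
      using sum_squared_le_sum_of_squares[of f UNIV] unfolding N_def .
    thus ?thesis unfolding 7 .
  qed
  have 9: "(\<Sum>u\<in>UNIV. f u ^ 2) * real N \<le> \<rho> * card S * N"
    using 4 unfolding 6 by (rule mult_right_mono) simp
  have "real (card S) ^ 2 \<le> \<rho> * card S * N"
    using 8 9 by (rule order_trans)
  hence "card S \<le> \<rho> * N"
  proof (cases "card S = 0")
    case False
    hence "real (card S) > 0" by linarith
    moreover assume "real (card S) ^ 2 \<le> \<rho> * card S * N"
    ultimately show ?thesis unfolding power2_eq_square
      by (metis mult.assoc mult.commute mult_le_cancel_left_pos)
  qed (use rho in simp)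
  thus ?thesis unfolding S_def N_def p_def .
qed

theorem lemma7p2:
  fixes A :: "'a::{finite,ab_group_add} set"
    and \<Gamma> :: "('a \<Rightarrow> complex) set"
    and \<delta> \<rho> :: real
  assumes "finite \<Gamma>" and "\<forall>\<gamma>\<in>\<Gamma>. character \<gamma>"
    and "\<delta> > 0" and "\<rho> > 0"
  shows "real (card {x\<in>A. conv (indicator A) (psi \<Gamma> \<delta>) x \<le> \<rho>}) \<le> \<rho> * real (card (UNIV :: 'a set))"
proof -
  define T where "T = (\<Sum>y\<in>(UNIV::'a set). bohr_smooth \<Gamma> \<delta> y)"
  have "bohr_smooth \<Gamma> \<delta> 0 \<le> T" unfolding T_def
    by (rule member_le_sum) (use bs_nonneg[OF assms(3)] in auto)
  hence Tpos: "T > 0" using bs_0[OF assms(2,3)] by simp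
  have bdef: "beta \<Gamma> \<delta> x = bohr_smooth \<Gamma> \<delta> x / T" for x unfolding beta_def T_def ..
  show ?thesis unfolding psi_def
  proof (rule main_comb)
    show "0 \<le> beta \<Gamma> \<delta> x" for x using Tpos bs_nonneg[OF assms(3), of \<Gamma> x] by (simp add: bdef)
    show "sum (beta \<Gamma> \<delta>) UNIV = 1" using Tpos by (simp add: bdef T_def flip: sum_divide_distrib)
    show "beta \<Gamma> \<delta> (- x) = beta \<Gamma> \<delta> x" for x by (simp add: bdef bs_neg[OF assms(2)])
  qed (rule assms(4))
qed

end
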